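(* Let $R$ be a subring of a ring $S$, and assume that every semiprime factor ring of $R$ and of $S$ is left or right Goldie and that the prime radical of every factor ring of $R$ and of $S$ is nilpotent. (i) If $I$ is an ideal of $R$ and $J$ an ideal of $S$ with $V_R(J\cap R)\subseteq V_R(I)$, then $V_S(J)\subseteq V_S(I^S)$. (ii) $\lambda$ is a left adjoint to $\rho$ if and only if for all ideals $I$ of $R$ and $J$ of $S$, $V_S(J)\subseteq V_S(I^S)$ implies $V_R(J\cap R)\subseteq V_R(I)$.
   Context: $\operatorname{Spec}$ carries the Zariski topology, closed sets $V_A(X)=\{P\in\operatorname{Spec} A:P\supseteq X\}$; for $U\subseteq\operatorname{Spec} A$, $I(U)$ is the intersection of the primes in $U$. For an ideal $I$ of $R$, $I^S=\operatorname{ann}_S(S/SI)$. The functor $\lambda$ sends a closed $V\subseteq\operatorname{Spec} S$ to $V_R(I(V)\cap R)$; the functor $\rho$ sends a closed $V\subseteq\operatorname{Spec} R$ to $V_S(I(V)^S)$. "$\lambda$ is a left adjoint to $\rho$" means $\lambda U\subseteq V\iff U\subseteq\rho V$ for all closed $U\subseteq\operatorname{Spec} S$, $V\subseteq\operatorname{Spec} R$. *)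

theory Defs
  imports "HOL-Algebra.Algebra"
begin

definition left_ideal :: "'a set \<Rightarrow> ('a, 'b) ring_scheme \<Rightarrow> bool" where
  "left_ideal L A \<longleftrightarrow> subgroup L (add_monoid A) \<and>
     (\<forall>a \<in> carrier A. \<forall>x \<in> L. a \<otimes>\<^bsub>A\<^esub> x \<in> L)"

definition right_ideal :: "'a set \<Rightarrow> ('a, 'b) ring_scheme \<Rightarrow> bool" where
  "right_ideal L A \<longleftrightarrow> subgroup L (add_monoid A) \<and>
     (\<forall>a \<in> carrier A. \<forall>x \<in> L. x \<otimes>\<^bsub>A\<^esub> a \<in> L)"

definition prime_ideal :: "'a set \<Rightarrow> ('a, 'b) ring_scheme \<Rightarrow> bool" where
  "prime_ideal P A \<longleftrightarrow> ideal P A \<and> P \<noteq> carrier A \<and>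
     (\<forall>I J. ideal I A \<longrightarrow> ideal J A \<longrightarrow> ideal_prod A I J \<subseteq> P \<longrightarrow> I \<subseteq> P \<or> J \<subseteq> P)"

definition Spec :: "('a, 'b) ring_scheme \<Rightarrow> 'a set set" where
  "Spec A = {P. prime_ideal P A}"

definition VV :: "('a, 'b) ring_scheme \<Rightarrow> 'a set \<Rightarrow> 'a set set" where
  "VV A Z = {P. P \<in> Spec A \<and> Z \<subseteq> P}"

definition zclosed :: "('a, 'b) ring_scheme \<Rightarrow> 'a set set \<Rightarrow> bool" where
  "zclosed A U \<longleftrightarrow> (\<exists>Z. U = VV A Z)"

definition II :: "('a, 'b) ring_scheme \<Rightarrow> 'a set set \<Rightarrow> 'a set" where
  "II A U = carrier A \<inter> \<Inter> U"

fun ideal_pow :: "('a, 'b) ring_scheme \<Rightarrow> 'a set \<Rightarrow> nat \<Rightarrow> 'a set" where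
  "ideal_pow A N 0 = carrier A"
| "ideal_pow A N (Suc n) = ideal_prod A (ideal_pow A N n) N"

definition nilpotent_ideal :: "'a set \<Rightarrow> ('a, 'b) ring_scheme \<Rightarrow> bool" where
  "nilpotent_ideal N A \<longleftrightarrow> (\<exists>n. ideal_pow A N n \<subseteq> {\<zero>\<^bsub>A\<^esub>})"

definition prime_radical :: "('a, 'b) ring_scheme \<Rightarrow> 'a set" where
  "prime_radical A = carrier A \<inter> \<Inter> (Spec A)"

definition semiprime_ring :: "('a, 'b) ring_scheme \<Rightarrow> bool" where
  "semiprime_ring A \<longleftrightarrow> (\<forall>N. ideal N A \<longrightarrow> nilpotent_ideal N A \<longrightarrow> N = {\<zero>\<^bsub>A\<^esub>})"

definition left_ann :: "('a, 'b) ring_scheme \<Rightarrow> 'a set \<Rightarrow> 'a set" where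
  "left_ann A Z = {a \<in> carrier A. \<forall>x \<in> Z. a \<otimes>\<^bsub>A\<^esub> x = \<zero>\<^bsub>A\<^esub>}"

definition right_ann :: "('a, 'b) ring_scheme \<Rightarrow> 'a set \<Rightarrow> 'a set" where
  "right_ann A Z = {a \<in> carrier A. \<forall>x \<in> Z. x \<otimes>\<^bsub>A\<^esub> a = \<zero>\<^bsub>A\<^esub>}"

definition sum_upto :: "('a, 'b) ring_scheme \<Rightarrow> (nat \<Rightarrow> 'a set) \<Rightarrow> nat \<Rightarrow> 'a set" where
  "sum_upto A L n = {y. \<exists>x. (\<forall>m<n. x m \<in> L m) \<and> y = finsum A x {..<n}}"

definition infinite_direct_sum :: "('a, 'b) ring_scheme \<Rightarrow> (nat \<Rightarrow> 'a set) \<Rightarrow> bool" where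
  "infinite_direct_sum A L \<longleftrightarrow>
     (\<forall>n. L n \<noteq> {\<zero>\<^bsub>A\<^esub>} \<and> L n \<inter> sum_upto A L n = {\<zero>\<^bsub>A\<^esub>})"

definition acc_on :: "'a set set \<Rightarrow> bool" where
  "acc_on \<F> \<longleftrightarrow> \<not> (\<exists>f :: nat \<Rightarrow> 'a set. (\<forall>n. f n \<in> \<F> \<and> f n \<subset> f (Suc n)))"

text \<open>Left Goldie: finite left uniform dimension and ACC on left annihilators.\<close>
definition left_goldie :: "('a, 'b) ring_scheme \<Rightarrow> bool" where
  "left_goldie A \<longleftrightarrow>
     \<not> (\<exists>L. (\<forall>n. left_ideal (L n) A) \<and> infinite_direct_sum A L) \<and>
     acc_on {left_ann A Z | Z. Z \<subseteq> carrier A}"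

definition right_goldie :: "('a, 'b) ring_scheme \<Rightarrow> bool" where
  "right_goldie A \<longleftrightarrow>
     \<not> (\<exists>L. (\<forall>n. right_ideal (L n) A) \<and> infinite_direct_sum A L) \<and>
     acc_on {right_ann A Z | Z. Z \<subseteq> carrier A}"

definition factor_rings_ok :: "('a, 'b) ring_scheme \<Rightarrow> bool" where
  "factor_rings_ok A \<longleftrightarrow>
     (\<forall>I. ideal I A \<longrightarrow>
        (semiprime_ring (A Quot I) \<longrightarrow> left_goldie (A Quot I) \<or> right_goldie (A Quot I)) \<and>
        nilpotent_ideal (prime_radical (A Quot I)) (A Quot I))"

text \<open>The left ideal \<open>SI\<close> of \<open>S\<close> generated by \<open>I\<close>.\<close>
definition left_gen :: "('a, 'b) ring_scheme \<Rightarrow> 'a set \<Rightarrow> 'a set" where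
  "left_gen S I = \<Inter> {L. left_ideal L S \<and> I \<subseteq> L}"

text \<open>\<open>I^S = ann_S(S/SI) = {s \<in> S. s t \<in> SI for all t \<in> S}\<close>.\<close>
definition ext_ideal :: "('a, 'b) ring_scheme \<Rightarrow> 'a set \<Rightarrow> 'a set" where
  "ext_ideal S I = {s \<in> carrier S. \<forall>t \<in> carrier S. s \<otimes>\<^bsub>S\<^esub> t \<in> left_gen S I}"

definition lam :: "('a, 'b) ring_scheme \<Rightarrow> 'a set \<Rightarrow> 'a set set \<Rightarrow> 'a set set" where
  "lam S R U = VV (S\<lparr>carrier := R\<rparr>) (II S U \<inter> R)"

definition rho :: "('a, 'b) ring_scheme \<Rightarrow> 'a set \<Rightarrow> 'a set set \<Rightarrow> 'a set set" where
  "rho S R V = VV S (ext_ideal S (II (S\<lparr>carrier := R\<rparr>) V))"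

definition lam_left_adjoint_rho :: "('a, 'b) ring_scheme \<Rightarrow> 'a set \<Rightarrow> bool" where
  "lam_left_adjoint_rho S R \<longleftrightarrow>
     (\<forall>U V. zclosed S U \<longrightarrow> zclosed (S\<lparr>carrier := R\<rparr>) V \<longrightarrow>
        (lam S R U \<subseteq> V \<longleftrightarrow> U \<subseteq> rho S R V))"

end

theory Submission
  imports Defs
begin

lemma ideal_subset: "ideal I R \<Longrightarrow> I \<subseteq> carrier R"
  using ideal.axioms(1) additive_subgroup.a_subset by metis

lemma (in ring) ideal_prod_mono:
  assumes "A \<subseteq> A'" "B \<subseteq> B'"
  shows "ideal_prod R A B \<subseteq> ideal_prod R A' B'"
proof
  fix x assume "x \<in> ideal_prod R A B" thus "x \<in> ideal_prod R A' B'"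
    by (induct x rule: ideal_prod.induct) (use assms in \<open>auto intro: ideal_prod.intros\<close>)
qed

lemma (in ring) ideal_pow_ideal:
  assumes "ideal N R" shows "ideal (ideal_pow R N n) R"
  by (induct n) (auto simp: oneideal ideal_prod_is_ideal assms)

lemma (in ring) ideal_pow_mono:
  assumes "A \<subseteq> B" shows "ideal_pow R A n \<subseteq> ideal_pow R B n"
  proof (induct n)
  case (Suc n) thus ?case using ideal_prod_mono[OF Suc assms] by simp
qed simp

lemma prime_pow:
  assumes "ring A" "prime_ideal P A" "ideal N A" "ideal_pow A N n \<subseteq> P"
  shows "N \<subseteq> P"
  using assms(4)
proof (induct n)
  case 0
  then show ?case using assms(2) ideal.axioms(1)[of P A] additive_subgroup.a_subset[of P A]
    unfolding prime_ideal_def by auto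
next
  case (Suc n)
  have "ideal (ideal_pow A N n) A" using ring.ideal_pow_ideal[OF assms(1) assms(3)] .
  then show ?case using Suc assms(2,3) unfolding prime_ideal_def by auto
qed

lemma II_ideal:
  assumes "ring A" "U \<subseteq> Spec A"
  shows "ideal (II A U) A"
proof (cases "U = {}")
  case True
  then show ?thesis by (simp add: II_def ring.oneideal[OF assms(1)])
next
  case False
  have "\<And>P. P \<in> U \<Longrightarrow> ideal P A" using assms(2) by (auto simp: Spec_def prime_ideal_def)
  hence "\<And>P. P \<in> U \<Longrightarrow> P \<subseteq> carrier A" using ideal.axioms(1) additive_subgroup.a_subset by blast
  hence "II A U = \<Inter>U" using False by (auto simp: II_def)
  then show ?thesis using ring.i_Intersect[OF assms(1)] False \<open>\<And>P. P \<in> U \<Longrightarrow> ideal P A\<close> by auto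
qed

lemma VV_Spec: "VV A Z \<subseteq> Spec A" by (auto simp: VV_def)

lemma zclosed_eq:
  assumes "zclosed A U"
  shows "U = VV A (II A U)"
proof -
  obtain Z where Z: "U = VV A Z" using assms by (auto simp: zclosed_def)
  have carr: "\<And>P. P \<in> Spec A \<Longrightarrow> P \<subseteq> carrier A"
    by (auto simp: Spec_def prime_ideal_def dest: ideal.axioms(1) additive_subgroup.a_subset)
  have ne: "\<And>P. P \<in> Spec A \<Longrightarrow> P \<noteq> carrier A" by (auto simp: Spec_def prime_ideal_def)
  show ?thesis
  proof
    show "U \<subseteq> VV A (II A U)" using Z by (auto simp: VV_def II_def)
  next
    show "VV A (II A U) \<subseteq> U"
    proof
      fix P assume P: "P \<in> VV A (II A U)"
      show "P \<in> U"
      proof (cases "Z \<subseteq> carrier A")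
        case True
        hence "Z \<subseteq> II A U" using Z by (auto simp: II_def VV_def)
        thus ?thesis using P Z by (auto simp: VV_def)
      next
        case False
        hence "U = {}" using Z carr by (auto simp: VV_def)
        thus ?thesis using P ne carr[of P] by (auto simp: VV_def II_def)
      qed
    qed
  qed
qed

lemma (in ring_hom_ring) img_ideal_prod:
  assumes "ideal I R" "ideal J R" "h ` I \<subseteq> M1" "h ` J \<subseteq> M2"
  shows "h ` (ideal_prod R I J) \<subseteq> ideal_prod S M1 M2"
proof
  fix y assume "y \<in> h ` (ideal_prod R I J)"
  then obtain x where x: "x \<in> ideal_prod R I J" "y = h x" by auto
  have "h x \<in> ideal_prod S M1 M2" using x(1)
  proof (induct x rule: ideal_prod.induct)
    case (prod i j)
    have "i \<in> carrier R" "j \<in> carrier R" using prod ideal_subset[OF assms(1)] ideal_subset[OF assms(2)] by blast+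
    hence e: "h (i \<otimes> j) = h i \<otimes>\<^bsub>S\<^esub> h j" by (rule hom_mult)
    have "h i \<in> M1" "h j \<in> M2" using prod assms(3,4) by blast+
    hence "h i \<otimes>\<^bsub>S\<^esub> h j \<in> ideal_prod S M1 M2" by (rule ideal_prod.prod)
    thus ?case using e by simp
  next
    case (sum s1 s2)
    have "s1 \<in> carrier R" "s2 \<in> carrier R" using sum R.ideal_prod_in_carrier[OF assms(1,2)] by blast+
    hence e: "h (s1 \<oplus> s2) = h s1 \<oplus>\<^bsub>S\<^esub> h s2" by (rule hom_add)
    have "h s1 \<oplus>\<^bsub>S\<^esub> h s2 \<in> ideal_prod S M1 M2" using sum(2,4) by (rule ideal_prod.sum)
    thus ?case using e by simp
  qed
  thus "y \<in> ideal_prod S M1 M2" using x by simp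
qed

lemma (in ring_hom_ring) img_ideal_pow:
  assumes "ideal N R" "h ` N \<subseteq> M"
  shows "h ` (ideal_pow R N n) \<subseteq> ideal_pow S M n"
proof (induct n)
  case 0 show ?case using hom_closed by (simp add: image_subset_iff)
next
  case (Suc n)
  show ?case using img_ideal_prod[OF R.ideal_pow_ideal[OF assms(1)] assms(1) Suc assms(2)] by simp
qed
lemma (in ring) quot_prime_vimage:
  assumes K: "ideal K R" and Q: "Q \<in> Spec (R Quot K)"
  shows "{r \<in> carrier R. K +> r \<in> Q} \<in> VV R K"
proof -
  interpret h: ring_hom_ring R "R Quot K" "(+>) K" by (rule ideal.rcos_ring_hom_ring[OF K])
  let ?P = "{r \<in> carrier R. K +> r \<in> Q}"
  have Qp: "prime_ideal Q (R Quot K)" using Q unfolding Spec_def by blast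
  have Qi: "ideal Q (R Quot K)" using Qp unfolding prime_ideal_def by blast
  have Pi: "ideal ?P R" by (rule h.ideal_vimage[OF Qi])
  have "\<one> \<notin> ?P"
  proof
    assume "\<one> \<in> ?P"
    hence "K +> \<one> \<in> Q" by blast
    moreover have "K +> \<one> = \<one>\<^bsub>R Quot K\<^esub>" by (rule h.hom_one)
    ultimately have "\<one>\<^bsub>R Quot K\<^esub> \<in> Q" by simp
    hence "Q = carrier (R Quot K)" by (rule ideal.one_imp_carrier[OF Qi])
    thus False using Qp unfolding prime_ideal_def by blast
  qed
  hence ne: "?P \<noteq> carrier R" using one_closed by blast
  have KP: "K \<subseteq> ?P"
  proof
    fix k assume k: "k \<in> K"
    have "K +> k = K" by (rule a_rcos_zero[OF K k])
    moreover have "K = \<zero>\<^bsub>R Quot K\<^esub>" unfolding FactRing_def by simp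
    moreover have "\<zero>\<^bsub>R Quot K\<^esub> \<in> Q" by (rule additive_subgroup.zero_closed[OF ideal.axioms(1)[OF Qi]])
    moreover have "k \<in> carrier R" using k ideal_subset[OF K] by blast
    ultimately show "k \<in> ?P" by simp
  qed
  have pr: "I \<subseteq> ?P \<or> J \<subseteq> ?P" if I: "ideal I R" and J: "ideal J R" and IJ: "ideal_prod R I J \<subseteq> ?P" for I J
  proof -
    have I': "ideal ((+>) K ` I) (R Quot K)" by (rule ring_ideal_imp_quot_ideal[OF K I])
    have J': "ideal ((+>) K ` J) (R Quot K)" by (rule ring_ideal_imp_quot_ideal[OF K J])
    have "ideal_prod (R Quot K) ((+>) K ` I) ((+>) K ` J) \<subseteq> Q"
    proof
      fix y assume "y \<in> ideal_prod (R Quot K) ((+>) K ` I) ((+>) K ` J)"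
      thus "y \<in> Q"
      proof (induct y rule: ideal_prod.induct)
        case (prod i' j')
        then obtain i j where ij: "i \<in> I" "j \<in> J" "i' = K +> i" "j' = K +> j" by blast
        have c: "i \<in> carrier R" "j \<in> carrier R" using ij ideal_subset[OF I] ideal_subset[OF J] by blast+
        have e: "K +> (i \<otimes> j) = i' \<otimes>\<^bsub>R Quot K\<^esub> j'" unfolding ij(3,4) by (rule h.hom_mult[OF c])
        have "i \<otimes> j \<in> ideal_prod R I J" using ij(1,2) by (rule ideal_prod.prod)
        hence "i \<otimes> j \<in> ?P" using IJ by blast
        hence "K +> (i \<otimes> j) \<in> Q" by blast
        thus ?case using e by simp
      next
        case (sum s1 s2) thus ?case using additive_subgroup.a_closed[OF ideal.axioms(1)[OF Qi]] by blast
      qed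
    qed
    hence "(+>) K ` I \<subseteq> Q \<or> (+>) K ` J \<subseteq> Q" using Qp I' J' unfolding prime_ideal_def by blast
    thus ?thesis using ideal_subset[OF I] ideal_subset[OF J] by blast
  qed
  have "prime_ideal ?P R" unfolding prime_ideal_def using Pi ne pr by blast
  thus ?thesis using KP unfolding VV_def Spec_def by blast
qed

lemma (in ring) nil_rad:
  assumes K: "ideal K R" and ok: "factor_rings_ok R"
  shows "\<exists>n. ideal_pow R (II R (VV R K)) n \<subseteq> K"
proof -
  interpret h: ring_hom_ring R "R Quot K" "(+>) K" by (rule ideal.rcos_ring_hom_ring[OF K])
  let ?B = "R Quot K"
  let ?N = "II R (VV R K)"
  have rB: "ring ?B" by (rule ideal.quotient_is_ring[OF K])
  have Ni: "ideal ?N R" by (rule II_ideal[OF ring_axioms VV_Spec])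
  have PRi: "ideal (prime_radical ?B) ?B"
    using II_ideal[OF rB, of "Spec ?B"] unfolding II_def prime_radical_def by blast
  have img: "(+>) K ` ?N \<subseteq> prime_radical ?B"
  proof
    fix y assume "y \<in> (+>) K ` ?N"
    then obtain x where x: "x \<in> ?N" "y = K +> x" by auto
    have xc: "x \<in> carrier R" using x unfolding II_def by blast
    have "y \<in> Q" if Q: "Q \<in> Spec ?B" for Q
    proof -
      have "{r \<in> carrier R. K +> r \<in> Q} \<in> VV R K" by (rule quot_prime_vimage[OF K Q])
      hence "x \<in> {r \<in> carrier R. K +> r \<in> Q}" using x(1) unfolding II_def by blast
      thus ?thesis using x by simp
    qed
    moreover have "y \<in> carrier ?B" using x(2) h.hom_closed[OF xc] by simp
    ultimately show "y \<in> prime_radical ?B" unfolding prime_radical_def by blast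
  qed
  have "nilpotent_ideal (prime_radical ?B) ?B" using ok K unfolding factor_rings_ok_def by blast
  then obtain n where n: "ideal_pow ?B (prime_radical ?B) n \<subseteq> {\<zero>\<^bsub>?B\<^esub>}"
    unfolding nilpotent_ideal_def by blast
  have "ideal_pow R ?N n \<subseteq> K"
  proof
    fix x assume x: "x \<in> ideal_pow R ?N n"
    have xc: "x \<in> carrier R" using x ideal_subset[OF ideal_pow_ideal[OF Ni]] by blast
    have "K +> x \<in> (+>) K ` ideal_pow R ?N n" using x by (rule imageI)
    hence "K +> x \<in> ideal_pow ?B (prime_radical ?B) n" using h.img_ideal_pow[OF Ni img, of n] by (rule subsetD[rotated])
    hence "K +> x \<in> {\<zero>\<^bsub>?B\<^esub>}" using n by (rule subsetD[rotated])
    moreover have z: "\<zero>\<^bsub>?B\<^esub> = K" unfolding FactRing_def by simp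
    ultimately have "K +> x = K" by (simp only: singleton_iff)
    thus "x \<in> K" using ideal.rcos_const_imp_mem[OF K xc] by simp
  qed
  thus ?thesis by blast
qed

lemma (in ring) add_subgroupI:
  assumes "L \<subseteq> carrier R" "\<zero> \<in> L" "\<And>a b. a \<in> L \<Longrightarrow> b \<in> L \<Longrightarrow> a \<oplus> b \<in> L"
    "\<And>a. a \<in> L \<Longrightarrow> \<ominus> a \<in> L"
  shows "subgroup L (add_monoid R)"
  using assms by (intro add.subgroupI) (auto simp: a_inv_def)

lemma (in ring) left_idealI:
  assumes "L \<subseteq> carrier R" "\<zero> \<in> L" "\<And>a b. a \<in> L \<Longrightarrow> b \<in> L \<Longrightarrow> a \<oplus> b \<in> L"
    "\<And>a x. a \<in> L \<Longrightarrow> x \<in> carrier R \<Longrightarrow> x \<otimes> a \<in> L"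
  shows "left_ideal L R"
proof -
  have "\<ominus> a \<in> L" if a: "a \<in> L" for a
  proof -
    have ac: "a \<in> carrier R" using a assms(1) by blast
    have "(\<ominus> \<one>) \<otimes> a = \<ominus> a" using ac by (simp add: l_minus)
    thus ?thesis using assms(4)[OF a, of "\<ominus> \<one>"] by simp
  qed
  thus ?thesis using assms add_subgroupI[of L] by (simp add: left_ideal_def)
qed

lemma (in ring) left_idealD:
  assumes "left_ideal L R"
  shows "L \<subseteq> carrier R" "\<zero> \<in> L" "\<And>a b. a \<in> L \<Longrightarrow> b \<in> L \<Longrightarrow> a \<oplus> b \<in> L"
    "\<And>a x. a \<in> L \<Longrightarrow> x \<in> carrier R \<Longrightarrow> x \<otimes> a \<in> L"
  using assms unfolding left_ideal_def
  using subgroup.subset[of L "add_monoid R"] apply auto[1]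
  using assms unfolding left_ideal_def by (auto dest: subgroup.one_closed subgroup.m_closed)

lemma (in ring) left_gen_ideal:
  assumes "I \<subseteq> carrier R" shows "left_ideal (left_gen R I) R"
proof -
  have cl: "left_ideal (carrier R) R" by (rule left_idealI) auto
  let ?F = "{L. left_ideal L R \<and> I \<subseteq> L}"
  have F: "carrier R \<in> ?F" using cl assms by simp
  show ?thesis unfolding left_gen_def
  proof (rule left_idealI)
    show "\<Inter>?F \<subseteq> carrier R" using F by blast
    show "\<zero> \<in> \<Inter>?F" using left_idealD(2) by blast
    show "a \<oplus> b \<in> \<Inter>?F" if "a \<in> \<Inter>?F" "b \<in> \<Inter>?F" for a b
      using that left_idealD(3) by blast
    show "x \<otimes> a \<in> \<Inter>?F" if "a \<in> \<Inter>?F" "x \<in> carrier R" for a x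
      using that left_idealD(4) by blast
  qed
qed

lemma left_gen_sub: "I \<subseteq> left_gen R I" by (auto simp: left_gen_def)

lemma left_gen_least: "left_ideal L R \<Longrightarrow> I \<subseteq> L \<Longrightarrow> left_gen R I \<subseteq> L"
  by (auto simp: left_gen_def)

lemma left_gen_mono: "I \<subseteq> J \<Longrightarrow> left_gen R I \<subseteq> left_gen R J"
  by (auto simp: left_gen_def)

lemma (in ring) ext_ideal_ideal:
  assumes "I \<subseteq> carrier R" shows "ideal (ext_ideal R I) R"
proof -
  let ?L = "left_gen R I"
  have L: "left_ideal ?L R" by (rule left_gen_ideal[OF assms])
  note D = left_idealD[OF L]
  show ?thesis
  proof (rule idealI[OF ring_axioms])
    show "subgroup (ext_ideal R I) (add_monoid R)"
    proof (rule add_subgroupI)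
      show "ext_ideal R I \<subseteq> carrier R" by (auto simp: ext_ideal_def)
      show "\<zero> \<in> ext_ideal R I" using D(2) by (auto simp: ext_ideal_def)
      show "a \<oplus> b \<in> ext_ideal R I" if "a \<in> ext_ideal R I" "b \<in> ext_ideal R I" for a b
        using that D(3) by (auto simp: ext_ideal_def l_distr)
      show "\<ominus> a \<in> ext_ideal R I" if "a \<in> ext_ideal R I" for a
      proof -
        have "\<ominus> a \<otimes> t = (\<ominus> \<one>) \<otimes> (a \<otimes> t)" if "t \<in> carrier R" for t
          using that \<open>a \<in> ext_ideal R I\<close> by (simp add: ext_ideal_def l_minus m_assoc[symmetric])
        thus ?thesis using that D(4) by (auto simp: ext_ideal_def)
      qed
    qed
    show "x \<otimes> a \<in> ext_ideal R I" if "a \<in> ext_ideal R I" "x \<in> carrier R" for a x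
      using that D(4) by (auto simp: ext_ideal_def m_assoc)
    show "a \<otimes> x \<in> ext_ideal R I" if "a \<in> ext_ideal R I" "x \<in> carrier R" for a x
      using that by (auto simp: ext_ideal_def m_assoc)
  qed
qed

lemma ideal_prod_sub_eq: "ideal_prod (R\<lparr>carrier := H\<rparr>) A B = ideal_prod R A B"
proof
  show "ideal_prod (R\<lparr>carrier := H\<rparr>) A B \<subseteq> ideal_prod R A B"
  proof
    fix x assume "x \<in> ideal_prod (R\<lparr>carrier := H\<rparr>) A B" thus "x \<in> ideal_prod R A B"
      by (induct x rule: ideal_prod.induct) (auto intro: ideal_prod.intros)
  qed
  show "ideal_prod R A B \<subseteq> ideal_prod (R\<lparr>carrier := H\<rparr>) A B"
  proof
    fix x assume "x \<in> ideal_prod R A B" thus "x \<in> ideal_prod (R\<lparr>carrier := H\<rparr>) A B"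
    proof (induct x rule: ideal_prod.induct)
      case (prod i j) thus ?case using ideal_prod.prod[of i A j B "R\<lparr>carrier := H\<rparr>"] by simp
    next
      case (sum s1 s2) thus ?case using ideal_prod.sum[of s1 "R\<lparr>carrier := H\<rparr>" A B s2] by simp
    qed
  qed
qed

lemma (in ring) sub_ideal_pow_sub:
  assumes "subring H R" "Xi \<subseteq> Yi"
  shows "ideal_pow (R\<lparr>carrier := H\<rparr>) Xi m \<subseteq> ideal_pow R Yi m"
proof (induct m)
  case 0 thus ?case using subringE(1)[OF assms(1)] by simp
next
  case (Suc m) thus ?case using ideal_prod_mono[OF Suc assms(2)] by (simp add: ideal_prod_sub_eq)
qed

lemma (in ring) ideal_inter_sub:
  assumes H: "subring H R" and J: "ideal J R"
  shows "ideal (J \<inter> H) (R\<lparr>carrier := H\<rparr>)"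
proof (rule idealI)
  show "ring (R\<lparr>carrier := H\<rparr>)" by (rule subring_is_ring[OF H])
  have "subgroup (J \<inter> H) (add_monoid R)"
    using add.subgroups_Inter_pair[OF additive_subgroup.a_subgroup[OF ideal.axioms(1)[OF J]] subring.axioms(1)[OF H]] .
  hence "subgroup (J \<inter> H) ((add_monoid R)\<lparr>carrier := H\<rparr>)"
    using add.subgroup_incl[OF _ subring.axioms(1)[OF H]] by blast
  thus "subgroup (J \<inter> H) (add_monoid (R\<lparr>carrier := H\<rparr>))" by simp
  show "x \<otimes>\<^bsub>R\<lparr>carrier := H\<rparr>\<^esub> a \<in> J \<inter> H" if "a \<in> J \<inter> H" "x \<in> carrier (R\<lparr>carrier := H\<rparr>)" for a x
  proof -
    have "a \<in> J" "a \<in> H" "x \<in> H" using that by auto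
    thus ?thesis using ideal.I_l_closed[OF J] subringE(1,6)[OF H] by auto
  qed
  show "a \<otimes>\<^bsub>R\<lparr>carrier := H\<rparr>\<^esub> x \<in> J \<inter> H" if "a \<in> J \<inter> H" "x \<in> carrier (R\<lparr>carrier := H\<rparr>)" for a x
  proof -
    have "a \<in> J" "a \<in> H" "x \<in> H" using that by auto
    thus ?thesis using ideal.I_r_closed[OF J] subringE(1,6)[OF H] by auto
  qed
qed

declare ideal_pow.simps(2)[simp del]

lemma (in ring) claimC:
  assumes H: "subring H R" and Xi: "ideal Xi (R\<lparr>carrier := H\<rparr>)"
  shows "x \<in> ideal_pow R (ext_ideal R Xi) n \<Longrightarrow> t \<in> carrier R \<Longrightarrow>
           x \<otimes> t \<in> left_gen R (ideal_pow (R\<lparr>carrier := H\<rparr>) Xi n)"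
proof -
  let ?R' = "R\<lparr>carrier := H\<rparr>"
  let ?L = "\<lambda>n. left_gen R (ideal_pow ?R' Xi n)"
  have rR': "ring ?R'" by (rule subring_is_ring[OF H])
  have Hc: "H \<subseteq> carrier R" by (rule subringE(1)[OF H])
  have Xpi: "\<And>n. ideal (ideal_pow ?R' Xi n) ?R'" by (rule ring.ideal_pow_ideal[OF rR' Xi])
  have XpH: "\<And>n. ideal_pow ?R' Xi n \<subseteq> H"
    using ideal_subset[OF Xpi] by simp
  have XH: "Xi \<subseteq> H" using ideal_subset[OF Xi] by simp
  have Lid: "\<And>n. left_ideal (?L n) R" using left_gen_ideal XpH Hc by (meson subset_trans)
  note LD = left_idealD[OF Lid]
  have LGid: "left_ideal (left_gen R Xi) R" using left_gen_ideal XH Hc by (meson subset_trans)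
  note LGD = left_idealD[OF LGid]
  have factA: "u \<otimes> i \<in> ?L (Suc n)" if u: "u \<in> ?L n" and i: "i \<in> Xi" for u i n
  proof -
    have ic: "i \<in> carrier R" using i XH Hc by blast
    let ?M = "{u \<in> carrier R. u \<otimes> i \<in> ?L (Suc n)}"
    have "left_ideal ?M R"
    proof (rule left_idealI)
      show "?M \<subseteq> carrier R" by blast
      show "\<zero> \<in> ?M" using ic LD(2) by simp
      show "a \<oplus> b \<in> ?M" if "a \<in> ?M" "b \<in> ?M" for a b
        using that ic LD(3) by (simp add: l_distr)
      show "x \<otimes> a \<in> ?M" if "a \<in> ?M" "x \<in> carrier R" for a x
        using that ic LD(4) by (simp add: m_assoc)
    qed
    moreover have "ideal_pow ?R' Xi n \<subseteq> ?M"
    proof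
      fix v assume v: "v \<in> ideal_pow ?R' Xi n"
      have "v \<otimes>\<^bsub>?R'\<^esub> i \<in> ideal_pow ?R' Xi (Suc n)" using v i unfolding ideal_pow.simps(2) by (rule ideal_prod.prod)
      hence "v \<otimes> i \<in> ?L (Suc n)" using left_gen_sub by fastforce
      thus "v \<in> ?M" using v XpH Hc by blast
    qed
    ultimately have "?L n \<subseteq> ?M" by (rule left_gen_least)
    thus ?thesis using u by blast
  qed
  have factB: "x \<otimes> y \<in> ?L (Suc n)"
    if x: "x \<in> carrier R" "\<forall>t \<in> carrier R. x \<otimes> t \<in> ?L n" and y: "y \<in> left_gen R Xi" for x y n
  proof -
    let ?M = "{y \<in> carrier R. \<forall>x \<in> carrier R. (\<forall>t \<in> carrier R. x \<otimes> t \<in> ?L n) \<longrightarrow> x \<otimes> y \<in> ?L (Suc n)}"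
    have "left_ideal ?M R"
    proof (rule left_idealI)
      show "?M \<subseteq> carrier R" by blast
      show "\<zero> \<in> ?M" using LD(2) by simp
      show "a \<oplus> b \<in> ?M" if "a \<in> ?M" "b \<in> ?M" for a b
        using that LD(3) by (simp add: r_distr)
      show "z \<otimes> a \<in> ?M" if a: "a \<in> ?M" and z: "z \<in> carrier R" for a z
      proof -
        have "w \<otimes> (z \<otimes> a) \<in> ?L (Suc n)" if w: "w \<in> carrier R" "\<forall>t \<in> carrier R. w \<otimes> t \<in> ?L n" for w
        proof -
          have "\<forall>t \<in> carrier R. (w \<otimes> z) \<otimes> t \<in> ?L n" using w z by (simp add: m_assoc)
          hence "(w \<otimes> z) \<otimes> a \<in> ?L (Suc n)" using a w z by simp
          thus ?thesis using a w z by (simp add: m_assoc)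
        qed
        thus ?thesis using a z by simp
      qed
    qed
    moreover have "Xi \<subseteq> ?M"
    proof
      fix i assume i: "i \<in> Xi"
      have ic: "i \<in> carrier R" using i XH Hc by blast
      have "w \<otimes> i \<in> ?L (Suc n)" if w: "w \<in> carrier R" "\<forall>t \<in> carrier R. w \<otimes> t \<in> ?L n" for w
      proof -
        have "w \<in> ?L n" using w(2) w(1) by (metis one_closed r_one)
        thus ?thesis using factA i by blast
      qed
      thus "i \<in> ?M" using ic by blast
    qed
    ultimately have "left_gen R Xi \<subseteq> ?M" by (rule left_gen_least)
    thus ?thesis using x y by blast
  qed
  have main: "\<forall>x \<in> ideal_pow R (ext_ideal R Xi) n. \<forall>t \<in> carrier R. x \<otimes> t \<in> ?L n" for n
  proof (induct n)
    case 0
    have "\<one> \<in> ?L 0" using subringE(3)[OF H] left_gen_sub by fastforce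
    hence c0: "carrier R \<subseteq> ?L 0" using LD(4) by (metis r_one subsetI)
    show ?case
    proof (intro ballI)
      fix x t assume "x \<in> ideal_pow R (ext_ideal R Xi) 0" "t \<in> carrier R"
      hence "x \<otimes> t \<in> carrier R" by simp
      thus "x \<otimes> t \<in> ?L 0" using c0 by blast
    qed
  next
    case (Suc n)
    have Ei: "ideal (ext_ideal R Xi) R" by (rule ext_ideal_ideal) (use XH Hc in blast)
    have Epi: "ideal (ideal_pow R (ext_ideal R Xi) n) R" by (rule ideal_pow_ideal[OF Ei])
    show ?case
    proof (intro ballI)
      fix x t assume x: "x \<in> ideal_pow R (ext_ideal R Xi) (Suc n)" and t: "t \<in> carrier R"
      hence "x \<in> ideal_prod R (ideal_pow R (ext_ideal R Xi) n) (ext_ideal R Xi)" using x unfolding ideal_pow.simps(2) by blast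
      thus "x \<otimes> t \<in> ?L (Suc n)" using t
      proof (induct x arbitrary: t rule: ideal_prod.induct)
        case (prod a e)
        have ac: "a \<in> carrier R" using prod ideal_subset[OF Epi] by blast
        have ec: "e \<in> carrier R" using prod ideal_subset[OF Ei] by blast
        have "e \<otimes> t \<in> left_gen R Xi" using prod by (simp add: ext_ideal_def)
        hence "a \<otimes> (e \<otimes> t) \<in> ?L (Suc n)" using factB[of a] Suc prod ac by blast
        thus ?case using ac ec prod by (simp add: m_assoc)
      next
        case (sum s1 s2)
        have "s1 \<in> carrier R" "s2 \<in> carrier R"
          using sum ideal_prod_in_carrier[OF Epi Ei] by blast+
        thus ?case using sum LD(3) by (simp add: l_distr)
      qed
    qed
  qed
  thus "x \<in> ideal_pow R (ext_ideal R Xi) n \<Longrightarrow> t \<in> carrier R \<Longrightarrow> x \<otimes> t \<in> ?L n" by blast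
qed

declare ideal_pow.simps(2)[simp]

lemma ideal_left:
  assumes J: "ideal J R" shows "left_ideal J R"
proof -
  have "subgroup J (add_monoid R)" by (rule additive_subgroup.a_subgroup[OF ideal.axioms(1)[OF J]])
  moreover have "\<forall>a \<in> carrier R. \<forall>x \<in> J. a \<otimes>\<^bsub>R\<^esub> x \<in> J"
    using ideal.I_l_closed[OF J] by blast
  ultimately show ?thesis unfolding left_ideal_def by blast
qed

lemma partI:
  assumes rS: "ring S" and sub: "subring R S" and ok: "factor_rings_ok (S\<lparr>carrier := R\<rparr>)"
    and I: "ideal I (S\<lparr>carrier := R\<rparr>)" and J: "ideal J S"
    and V: "VV (S\<lparr>carrier := R\<rparr>) (J \<inter> R) \<subseteq> VV (S\<lparr>carrier := R\<rparr>) I"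
  shows "VV S J \<subseteq> VV S (ext_ideal S I)"
proof -
  let ?R' = "S\<lparr>carrier := R\<rparr>"
  have rR': "ring ?R'" by (rule ring.subring_is_ring[OF rS sub])
  have Rc: "R \<subseteq> carrier S" by (rule subringE(1)[OF sub])
  have Kid: "ideal (J \<inter> R) ?R'" by (rule ring.ideal_inter_sub[OF rS sub J])
  let ?N = "II ?R' (VV ?R' (J \<inter> R))"
  have IR: "I \<subseteq> R" using ideal_subset[OF I] by simp
  have IN: "I \<subseteq> ?N"
  proof
    fix x assume x: "x \<in> I"
    have "x \<in> P" if "P \<in> VV ?R' (J \<inter> R)" for P
      using V that x unfolding VV_def by blast
    thus "x \<in> ?N" using x IR unfolding II_def by auto
  qed
  obtain n where n: "ideal_pow ?R' ?N n \<subseteq> J \<inter> R" using ring.nil_rad[OF rR' Kid ok] by blast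
  have In: "ideal_pow ?R' I n \<subseteq> J" using ring.ideal_pow_mono[OF rR' IN, of n] n by blast
  have Eid: "ideal (ext_ideal S I) S" by (rule ring.ext_ideal_ideal[OF rS]) (use IR Rc in blast)
  show ?thesis
  proof
    fix P assume P: "P \<in> VV S J"
    have Pp: "prime_ideal P S" and JP: "J \<subseteq> P" using P unfolding VV_def Spec_def by auto
    have "ideal_pow S (ext_ideal S I) n \<subseteq> P"
    proof
      fix x assume x: "x \<in> ideal_pow S (ext_ideal S I) n"
      have xc: "x \<in> carrier S" using x ideal_subset[OF ring.ideal_pow_ideal[OF rS Eid]] by blast
      have "x \<otimes>\<^bsub>S\<^esub> \<one>\<^bsub>S\<^esub> \<in> left_gen S (ideal_pow ?R' I n)"
        by (rule ring.claimC[OF rS sub I x monoid.one_closed[OF ring.is_monoid[OF rS]]])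
      moreover have "x \<otimes>\<^bsub>S\<^esub> \<one>\<^bsub>S\<^esub> = x" using monoid.r_one[OF ring.is_monoid[OF rS] xc] .
      moreover have "left_gen S (ideal_pow ?R' I n) \<subseteq> J"
        by (rule left_gen_least[OF ideal_left[OF J] In])
      ultimately show "x \<in> P" using JP by auto
    qed
    hence "ext_ideal S I \<subseteq> P" by (rule prime_pow[OF rS Pp Eid])
    thus "P \<in> VV S (ext_ideal S I)" using P unfolding VV_def by blast
  qed
qed

lemma contr_rad:
  assumes rS: "ring S" and sub: "subring R S" and ok: "factor_rings_ok S" and J: "ideal J S"
  shows "VV (S\<lparr>carrier := R\<rparr>) (II S (VV S J) \<inter> R) = VV (S\<lparr>carrier := R\<rparr>) (J \<inter> R)"
proof -
  let ?R' = "S\<lparr>carrier := R\<rparr>"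
  let ?J' = "II S (VV S J)"
  have rR': "ring ?R'" by (rule ring.subring_is_ring[OF rS sub])
  have JJ': "J \<subseteq> ?J'" using ideal_subset[OF J] unfolding II_def VV_def by blast
  have J'id: "ideal ?J' S" by (rule II_ideal[OF rS VV_Spec])
  have J'Rid: "ideal (?J' \<inter> R) ?R'" by (rule ring.ideal_inter_sub[OF rS sub J'id])
  obtain m where m: "ideal_pow S ?J' m \<subseteq> J" using ring.nil_rad[OF rS J ok] by blast
  have pm: "ideal_pow ?R' (?J' \<inter> R) m \<subseteq> J \<inter> R"
  proof -
    have "ideal_pow ?R' (?J' \<inter> R) m \<subseteq> ideal_pow S ?J' m"
      by (rule ring.sub_ideal_pow_sub[OF rS sub]) blast
    moreover have "ideal_pow ?R' (?J' \<inter> R) m \<subseteq> R"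
      using ideal_subset[OF ring.ideal_pow_ideal[OF rR' J'Rid, of m]] by simp
    ultimately show ?thesis using m by blast
  qed
  show ?thesis
  proof
    show "VV ?R' (?J' \<inter> R) \<subseteq> VV ?R' (J \<inter> R)" using JJ' unfolding VV_def by blast
  next
    show "VV ?R' (J \<inter> R) \<subseteq> VV ?R' (?J' \<inter> R)"
    proof
      fix Q assume Q: "Q \<in> VV ?R' (J \<inter> R)"
      have Qp: "prime_ideal Q ?R'" and JQ: "J \<inter> R \<subseteq> Q" using Q unfolding VV_def Spec_def by auto
      have "?J' \<inter> R \<subseteq> Q" by (rule prime_pow[OF rR' Qp J'Rid]) (use pm JQ in blast)
      thus "Q \<in> VV ?R' (?J' \<inter> R)" using Q unfolding VV_def by blast
    qed
  qed
qed

lemma ext_rad: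
  assumes rS: "ring S" and sub: "subring R S" and ok: "factor_rings_ok (S\<lparr>carrier := R\<rparr>)"
    and I: "ideal I (S\<lparr>carrier := R\<rparr>)"
  shows "VV S (ext_ideal S (II (S\<lparr>carrier := R\<rparr>) (VV (S\<lparr>carrier := R\<rparr>) I))) = VV S (ext_ideal S I)"
proof -
  let ?R' = "S\<lparr>carrier := R\<rparr>"
  let ?I' = "II ?R' (VV ?R' I)"
  have rR': "ring ?R'" by (rule ring.subring_is_ring[OF rS sub])
  have Rc: "R \<subseteq> carrier S" by (rule subringE(1)[OF sub])
  have II': "I \<subseteq> ?I'" using ideal_subset[OF I] unfolding II_def VV_def by blast
  have I'id: "ideal ?I' ?R'" by (rule II_ideal[OF rR' VV_Spec])
  have I'R: "?I' \<subseteq> R" using ideal_subset[OF I'id] by simp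
  have E'id: "ideal (ext_ideal S ?I') S" by (rule ring.ext_ideal_ideal[OF rS]) (use I'R Rc in blast)
  obtain n where n: "ideal_pow ?R' ?I' n \<subseteq> I" using ring.nil_rad[OF rR' I ok] by blast
  have mono: "ext_ideal S I \<subseteq> ext_ideal S ?I'"
    using left_gen_mono[OF II', of S] unfolding ext_ideal_def by blast
  show ?thesis
  proof
    show "VV S (ext_ideal S ?I') \<subseteq> VV S (ext_ideal S I)" using mono unfolding VV_def by blast
  next
    show "VV S (ext_ideal S I) \<subseteq> VV S (ext_ideal S ?I')"
    proof
      fix P assume P: "P \<in> VV S (ext_ideal S I)"
      have Pp: "prime_ideal P S" and EP: "ext_ideal S I \<subseteq> P" using P unfolding VV_def Spec_def by auto
      have "ideal_pow S (ext_ideal S ?I') n \<subseteq> ext_ideal S I"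
      proof
        fix x assume x: "x \<in> ideal_pow S (ext_ideal S ?I') n"
        have xc: "x \<in> carrier S" using x ideal_subset[OF ring.ideal_pow_ideal[OF rS E'id]] by blast
        have "x \<otimes>\<^bsub>S\<^esub> t \<in> left_gen S I" if t: "t \<in> carrier S" for t
        proof -
          have "x \<otimes>\<^bsub>S\<^esub> t \<in> left_gen S (ideal_pow ?R' ?I' n)"
            by (rule ring.claimC[OF rS sub I'id x t])
          thus ?thesis using left_gen_mono[OF n, of S] by blast
        qed
        thus "x \<in> ext_ideal S I" using xc unfolding ext_ideal_def by blast
      qed
      hence "ext_ideal S ?I' \<subseteq> P" using EP by (intro prime_pow[OF rS Pp E'id]) blast
      thus "P \<in> VV S (ext_ideal S ?I')" using P unfolding VV_def by blast
    qed
  qed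
qed

theorem lemma3p12:
  fixes S :: "('a, 'b) ring_scheme" and R :: "'a set"
  assumes "ring S"
    and "subring R S"
    and "factor_rings_ok (S\<lparr>carrier := R\<rparr>)"
    and "factor_rings_ok S"
  shows "(\<forall>I J. ideal I (S\<lparr>carrier := R\<rparr>) \<longrightarrow> ideal J S \<longrightarrow>
            VV (S\<lparr>carrier := R\<rparr>) (J \<inter> R) \<subseteq> VV (S\<lparr>carrier := R\<rparr>) I \<longrightarrow>
            VV S J \<subseteq> VV S (ext_ideal S I))
       \<and> (lam_left_adjoint_rho S R \<longleftrightarrow>
           (\<forall>I J. ideal I (S\<lparr>carrier := R\<rparr>) \<longrightarrow> ideal J S \<longrightarrow>
              VV S J \<subseteq> VV S (ext_ideal S I) \<longrightarrow>
              VV (S\<lparr>carrier := R\<rparr>) (J \<inter> R) \<subseteq> VV (S\<lparr>carrier := R\<rparr>) I))"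
proof -
  let ?R' = "S\<lparr>carrier := R\<rparr>"
  have rS: "ring S" by fact
  have rR': "ring ?R'" by (rule ring.subring_is_ring[OF rS assms(2)])
  have P1: "\<forall>I J. ideal I ?R' \<longrightarrow> ideal J S \<longrightarrow>
            VV ?R' (J \<inter> R) \<subseteq> VV ?R' I \<longrightarrow> VV S J \<subseteq> VV S (ext_ideal S I)"
    using partI[OF assms(1,2,3)] by blast
  have P2: "lam_left_adjoint_rho S R \<longleftrightarrow>
           (\<forall>I J. ideal I ?R' \<longrightarrow> ideal J S \<longrightarrow>
              VV S J \<subseteq> VV S (ext_ideal S I) \<longrightarrow> VV ?R' (J \<inter> R) \<subseteq> VV ?R' I)"
  proof
    assume adj: "lam_left_adjoint_rho S R"
    show "\<forall>I J. ideal I ?R' \<longrightarrow> ideal J S \<longrightarrow>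
              VV S J \<subseteq> VV S (ext_ideal S I) \<longrightarrow> VV ?R' (J \<inter> R) \<subseteq> VV ?R' I"
    proof (intro allI impI)
      fix I J assume I: "ideal I ?R'" and J: "ideal J S" and H: "VV S J \<subseteq> VV S (ext_ideal S I)"
      let ?U = "VV S J" and ?V = "VV ?R' I"
      have zU: "zclosed S ?U" unfolding zclosed_def by blast
      have zV: "zclosed ?R' ?V" unfolding zclosed_def by blast
      have "?U \<subseteq> rho S R ?V"
        unfolding rho_def ext_rad[OF rS assms(2,3) I] using H .
      hence "lam S R ?U \<subseteq> ?V" using adj zU zV unfolding lam_left_adjoint_rho_def by (elim allE impE) auto
      thus "VV ?R' (J \<inter> R) \<subseteq> ?V"
        unfolding lam_def contr_rad[OF rS assms(2,4) J] .
    qed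
  next
    assume C: "\<forall>I J. ideal I ?R' \<longrightarrow> ideal J S \<longrightarrow>
              VV S J \<subseteq> VV S (ext_ideal S I) \<longrightarrow> VV ?R' (J \<inter> R) \<subseteq> VV ?R' I"
    show "lam_left_adjoint_rho S R" unfolding lam_left_adjoint_rho_def
    proof (intro allI impI)
      fix U V assume zU: "zclosed S U" and zV: "zclosed ?R' V"
      let ?J = "II S U" and ?I = "II ?R' V"
      have Ueq: "U = VV S ?J" by (rule zclosed_eq[OF zU])
      have Veq: "V = VV ?R' ?I" by (rule zclosed_eq[OF zV])
      have Jid: "ideal ?J S" by (rule II_ideal[OF rS]) (subst Ueq, rule VV_Spec)
      have Iid: "ideal ?I ?R'" by (rule II_ideal[OF rR']) (subst Veq, rule VV_Spec)
      have l: "lam S R U = VV ?R' (?J \<inter> R)" unfolding lam_def ..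
      have r: "rho S R V = VV S (ext_ideal S ?I)" unfolding rho_def ..
      show "lam S R U \<subseteq> V \<longleftrightarrow> U \<subseteq> rho S R V"
      proof
        assume "lam S R U \<subseteq> V"
        hence "VV ?R' (?J \<inter> R) \<subseteq> VV ?R' ?I" using l Veq by simp
        hence "VV S ?J \<subseteq> VV S (ext_ideal S ?I)" by (rule P1[rule_format, OF Iid Jid])
        thus "U \<subseteq> rho S R V" using r Ueq by simp
      next
        assume "U \<subseteq> rho S R V"
        hence "VV S ?J \<subseteq> VV S (ext_ideal S ?I)" using r Ueq by simp
        hence "VV ?R' (?J \<inter> R) \<subseteq> VV ?R' ?I" by (rule C[rule_format, OF Iid Jid])
        thus "lam S R U \<subseteq> V" using l Veq by simp
      qed
    qed
  qed
  show ?thesis using P1 P2 by (rule conjI)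
qed

end
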